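(* Let $d\ge1$, $x_1<x_2$, $x_0\in[x_1,x_2]$, let $p,q,r_1,\dots,r_d,s_1,\dots,s_d$ be functions on $[x_1,x_2]$, $Ly=(py')'+qy$, $R_i[y]=r_iy+s_iy'$, and let $u_0$ be a nonvanishing function on $[x_1,x_2]$ with $Lu_0=0$. Then for every $\mathbf n\in\mathbb Z_{\ge0}^d$, $$L\big[u_0\tilde X^{(2\mathbf n)}\big]=2|\mathbf n|(2|\mathbf n|-1)\sum_{i=1}^dR_i\big[u_0\tilde X^{(2\mathbf n-2\delta_i)}\big]$$ and $$L\big[u_0X^{(2\mathbf n+\frac1d\mathbf 1)}\big]=(2|\mathbf n|+1)(2|\mathbf n|)\sum_{i=1}^dR_i\big[u_0X^{(2\mathbf n-2\delta_i+\frac1d\mathbf 1)}\big].$$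
   Context: Notation: $\int f$ denotes $x\mapsto\int_{x_0}^x f(s)\,ds$; $|\mathbf j|=j_1+\cdots+j_d$; $\delta_i$ the $i$-th standard basis vector; $\mathbf 1=(1,\dots,1)$. Generalized formal powers $\tilde X$: for $\mathbf j\in\mathbb Z^d$, admissible means at most one $j_i$ odd; $\tilde X^{(\mathbf 0)}\equiv1$; $\tilde X^{(\mathbf j)}\equiv0$ if some $j_i<0$; for admissible $\mathbf j\ge0$, $\mathbf j\ne\mathbf0$: if $|\mathbf j|$ is odd with odd entry $j_i$, $\tilde X^{(\mathbf j)}=|\mathbf j|\int u_0R_i[u_0\tilde X^{(\mathbf j-\delta_i)}]$; if $|\mathbf j|$ is even, $\tilde X^{(\mathbf j)}=|\mathbf j|\int\frac{1}{pu_0^2}\sum_{i=1}^d\tilde X^{(\mathbf j-\delta_i)}$. Generalized formal powers $X$: indexed by $\mathbf j=\mathbf m+\frac1d\mathbf 1$, $\mathbf m\in\mathbb Z^d$, $|\mathbf j|=|\mathbf m|+1$; admissible means at most one $m_i$ odd; $X^{(\frac1d\mathbf 1-\delta_i)}\equiv\frac1d$; $X^{(\mathbf m+\frac1d\mathbf 1)}\equiv0$ if some $m_i<0$ and $\mathbf m\notin\{-\delta_1,\dots,-\delta_d\}$; for admissible $\mathbf j$ with $\mathbf m\ge0$: if $|\mathbf j|$ is even (exactly one $m_i$ odd), $X^{(\mathbf j)}=|\mathbf j|\int u_0R_i[u_0X^{(\mathbf j-\delta_i)}]$ for that $i$; if $|\mathbf j|$ is odd, $X^{(\mathbf j)}=|\mathbf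 j|\int\frac{1}{pu_0^2}\sum_{i=1}^dX^{(\mathbf j-\delta_i)}$. *)

theory Defs
  imports "HOL-Analysis.Analysis"
begin

definition dI :: "real \<Rightarrow> real \<Rightarrow> (real \<Rightarrow> complex) \<Rightarrow> real \<Rightarrow> complex" where
  "dI x1 x2 f x = vector_derivative f (at x within {x1..x2})"

definition integ :: "real \<Rightarrow> (real \<Rightarrow> complex) \<Rightarrow> real \<Rightarrow> complex" where
  "integ x0 g x = (if x0 \<le> x then integral {x0..x} g else - integral {x..x0} g)"

definition Lop :: "real \<Rightarrow> real \<Rightarrow> (real \<Rightarrow> complex) \<Rightarrow> (real \<Rightarrow> complex)
    \<Rightarrow> (real \<Rightarrow> complex) \<Rightarrow> real \<Rightarrow> complex" where
  "Lop x1 x2 p q y x = dI x1 x2 (\<lambda>t. p t * dI x1 x2 y t) x + q x * y x"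

definition Rop :: "real \<Rightarrow> real \<Rightarrow> ('d \<Rightarrow> real \<Rightarrow> complex) \<Rightarrow> ('d \<Rightarrow> real \<Rightarrow> complex)
    \<Rightarrow> 'd \<Rightarrow> (real \<Rightarrow> complex) \<Rightarrow> real \<Rightarrow> complex" where
  "Rop x1 x2 r s i y x = r i x * y x + s i x * dI x1 x2 y x"

definition delta :: "'d \<Rightarrow> 'd \<Rightarrow> int" where
  "delta i = (\<lambda>k. if k = i then 1 else 0)"

definition admissible :: "('d::finite \<Rightarrow> int) \<Rightarrow> bool" where
  "admissible j \<longleftrightarrow> card {i. odd (j i)} \<le> 1"

text \<open>Level-indexed construction of the powers X-tilde; the level k equals |j|.
  Non-admissible indices (never used) are assigned the value 0.\<close>
fun XtL :: "real \<Rightarrow> real \<Rightarrow> real \<Rightarrow> (real \<Rightarrow> complex) \<Rightarrow> (real \<Rightarrow> complex)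
    \<Rightarrow> ('d::finite \<Rightarrow> real \<Rightarrow> complex) \<Rightarrow> ('d \<Rightarrow> real \<Rightarrow> complex)
    \<Rightarrow> nat \<Rightarrow> ('d \<Rightarrow> int) \<Rightarrow> real \<Rightarrow> complex" where
  "XtL x1 x2 x0 p u0 r s 0 j = (if j = (\<lambda>_. 0) then (\<lambda>_. 1) else (\<lambda>_. 0))"
| "XtL x1 x2 x0 p u0 r s (Suc k) j =
     (if (\<exists>i. j i < 0) \<or> \<not> admissible j then (\<lambda>_. 0)
      else if odd (Suc k) then
        (let i = (THE i. odd (j i)) in
          (\<lambda>x. of_nat (Suc k) * integ x0 (\<lambda>t. u0 t *
             Rop x1 x2 r s i (\<lambda>y. u0 y * XtL x1 x2 x0 p u0 r s k (\<lambda>k. j k - delta i k) y) t) x))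
      else
        (\<lambda>x. of_nat (Suc k) * integ x0 (\<lambda>t. 1 / (p t * (u0 t)\<^sup>2) *
             (\<Sum>i\<in>UNIV. XtL x1 x2 x0 p u0 r s k (\<lambda>k. j k - delta i k) t)) x))"

definition Xtilde :: "real \<Rightarrow> real \<Rightarrow> real \<Rightarrow> (real \<Rightarrow> complex) \<Rightarrow> (real \<Rightarrow> complex)
    \<Rightarrow> ('d::finite \<Rightarrow> real \<Rightarrow> complex) \<Rightarrow> ('d \<Rightarrow> real \<Rightarrow> complex)
    \<Rightarrow> ('d \<Rightarrow> int) \<Rightarrow> real \<Rightarrow> complex" where
  "Xtilde x1 x2 x0 p u0 r s j = XtL x1 x2 x0 p u0 r s (nat (sum j UNIV)) j"

text \<open>Level-indexed construction of the powers X^(m + 1/d 1); the level k equals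
  |j| = |m| + 1.  Non-admissible indices (never used) are assigned the value 0.\<close>
fun XL :: "real \<Rightarrow> real \<Rightarrow> real \<Rightarrow> (real \<Rightarrow> complex) \<Rightarrow> (real \<Rightarrow> complex)
    \<Rightarrow> ('d::finite \<Rightarrow> real \<Rightarrow> complex) \<Rightarrow> ('d \<Rightarrow> real \<Rightarrow> complex)
    \<Rightarrow> nat \<Rightarrow> ('d \<Rightarrow> int) \<Rightarrow> real \<Rightarrow> complex" where
  "XL x1 x2 x0 p u0 r s 0 m =
     (if \<exists>i. m = (\<lambda>k. - delta i k) then (\<lambda>_. 1 / of_nat CARD('d)) else (\<lambda>_. 0))"
| "XL x1 x2 x0 p u0 r s (Suc k) m =
     (if \<exists>i. m = (\<lambda>k. - delta i k) then (\<lambda>_. 1 / of_nat CARD('d))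
      else if (\<exists>i. m i < 0) \<or> \<not> admissible m then (\<lambda>_. 0)
      else if even (Suc k) then
        (let i = (THE i. odd (m i)) in
          (\<lambda>x. of_nat (Suc k) * integ x0 (\<lambda>t. u0 t *
             Rop x1 x2 r s i (\<lambda>y. u0 y * XL x1 x2 x0 p u0 r s k (\<lambda>k. m k - delta i k) y) t) x))
      else
        (\<lambda>x. of_nat (Suc k) * integ x0 (\<lambda>t. 1 / (p t * (u0 t)\<^sup>2) *
             (\<Sum>i\<in>UNIV. XL x1 x2 x0 p u0 r s k (\<lambda>k. m k - delta i k) t)) x))"

text \<open>X^(m + 1/d 1) for m in Z^d (the argument is m).\<close>
definition Xpow :: "real \<Rightarrow> real \<Rightarrow> real \<Rightarrow> (real \<Rightarrow> complex) \<Rightarrow> (real \<Rightarrow> complex)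
    \<Rightarrow> ('d::finite \<Rightarrow> real \<Rightarrow> complex) \<Rightarrow> ('d \<Rightarrow> real \<Rightarrow> complex)
    \<Rightarrow> ('d \<Rightarrow> int) \<Rightarrow> real \<Rightarrow> complex" where
  "Xpow x1 x2 x0 p u0 r s m = XL x1 x2 x0 p u0 r s (nat (sum m UNIV + 1)) m"

end

theory Submission
  imports Defs
begin


definition C1 :: "real \<Rightarrow> real \<Rightarrow> (real \<Rightarrow> complex) \<Rightarrow> (real \<Rightarrow> complex) \<Rightarrow> bool" where
  "C1 a b f g \<longleftrightarrow> continuous_on {a..b} g \<and>
     (\<forall>x\<in>{a..b}. (f has_vector_derivative g x) (at x within {a..b}))"

lemma dI_eq:
  assumes "a < b" "x \<in> {a..b}" "(f has_vector_derivative g) (at x within {a..b})"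
  shows "dI a b f x = g"
  unfolding dI_def using vector_derivative_within_closed_interval[OF assms] .

lemma C1_cont: "C1 a b f g \<Longrightarrow> continuous_on {a..b} f"
  unfolding C1_def by (auto intro: continuous_on_vector_derivative)

lemma C1_const: "C1 a b (\<lambda>_. c) (\<lambda>_. 0)"
  unfolding C1_def by auto

lemma integ_eq:
  assumes "continuous_on {a..b} g" "x0 \<in> {a..b}" "y \<in> {a..b}"
  shows "integ x0 g y = integral {a..y} g - integral {a..x0} g"
proof (cases "x0 \<le> y")
  case True
  have "g integrable_on {a..y}"
    by (rule integrable_continuous_interval, rule continuous_on_subset[OF assms(1)]) (use assms in auto)
  then have "integral {a..x0} g + integral {x0..y} g = integral {a..y} g"
    using Henstock_Kurzweil_Integration.integral_combine[where a=a and c=x0 and b=y and f=g] True assms by auto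
  then show ?thesis using True unfolding integ_def by (simp add: algebra_simps)
next
  case False
  have "g integrable_on {a..x0}"
    by (rule integrable_continuous_interval, rule continuous_on_subset[OF assms(1)]) (use assms in auto)
  then have "integral {a..y} g + integral {y..x0} g = integral {a..x0} g"
    using Henstock_Kurzweil_Integration.integral_combine[where a=a and c=y and b=x0 and f=g] False assms by auto
  then show ?thesis using False unfolding integ_def by (auto simp: algebra_simps)
qed

lemma integ_deriv:
  assumes "continuous_on {a..b} g" "x0 \<in> {a..b}" "x \<in> {a..b}"
  shows "(integ x0 g has_vector_derivative g x) (at x within {a..b})"
proof -
  have "((\<lambda>y. integral {a..y} g - integral {a..x0} g) has_vector_derivative g x) (at x within {a..b})"
    using integral_has_vector_derivative[OF assms(1,3)] by (simp add: has_vector_derivative_diff_const)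
  then show ?thesis
    by (rule has_vector_derivative_transform[OF assms(3), rotated]) (simp add: integ_eq[OF assms(1,2)])
qed

lemma C1_integ:
  assumes "continuous_on {a..b} g" "x0 \<in> {a..b}"
  shows "C1 a b (\<lambda>x. c * integ x0 g x) (\<lambda>x. c * g x)"
  unfolding C1_def using assms
  by (auto intro!: continuous_intros has_vector_derivative_mult_right integ_deriv)

lemma inv_deriv:
  fixes f :: "real \<Rightarrow> complex"
  assumes "(f has_vector_derivative f') (at x within S)" "f x \<noteq> 0"
  shows "((\<lambda>t. inverse (f t)) has_vector_derivative (- f' / (f x)^2)) (at x within S)"
proof -
  have "((\<lambda>t. inverse (f t)) has_derivative (\<lambda>h. - (inverse (f x) * (h *\<^sub>R f') * inverse (f x)))) (at x within S)"
    using Deriv.has_derivative_inverse[OF assms(2) assms(1)[unfolded has_vector_derivative_def]] .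
  moreover have "(\<lambda>h. - (inverse (f x) * (h *\<^sub>R f') * inverse (f x))) = (\<lambda>h. h *\<^sub>R (- f' / (f x)^2))"
    using assms(2) by (auto simp: fun_eq_iff scaleR_conv_of_real field_simps power2_eq_square)
  ultimately show ?thesis unfolding has_vector_derivative_def by simp
qed

lemma sum_delta: "(\<Sum>k\<in>(UNIV::'d::finite set). delta i k) = 1"
  by (simp add: delta_def)

lemma sum2: "(\<Sum>k\<in>(UNIV::'d::finite set). 2 * int (n k)) = 2 * int (sum n UNIV)"
  by (simp add: sum_distrib_left of_nat_sum)

lemma sum2d: "(\<Sum>k\<in>(UNIV::'d::finite set). 2 * int (n k) - delta i k) = 2 * int (sum n UNIV) - 1"
  by (simp add: sum_subtractf sum2 sum_delta)

lemma sum2dd: "(\<Sum>k\<in>(UNIV::'d::finite set). 2 * int (n k) - 2 * delta i k) = 2 * int (sum n UNIV) - 2"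
  by (simp add: sum_subtractf sum2 sum_delta sum_distrib_left[symmetric])

lemma adm_even: "admissible (\<lambda>k::'d::finite. 2 * int (n k))"
  unfolding admissible_def by simp

lemma adm_odd: "admissible (\<lambda>k::'d::finite. 2 * int (n k) - delta i k)"
proof -
  have "{k. odd (2 * int (n k) - delta i k)} = {i}" by (auto simp: delta_def)
  then show ?thesis unfolding admissible_def by simp
qed

lemma the_odd: "(THE k. odd (2 * int (n k) - delta i k)) = i"
  by (rule the_equality) (auto simp: delta_def split: if_splits)

lemma fun2: "(\<lambda>k. 2 * int (n k) - delta i k - delta i k) = (\<lambda>k. 2 * int (n k) - 2 * delta i k)"
  by auto

lemma XtL_neg: "\<exists>i. j i < 0 \<Longrightarrow> XtL x1 x2 x0 p u0 r s k j = (\<lambda>_. 0)"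
  by (cases k) auto

lemma Xtilde_neg: "\<exists>i. j i < 0 \<Longrightarrow> Xtilde x1 x2 x0 p u0 r s j = (\<lambda>_. 0)"
  unfolding Xtilde_def by (rule XtL_neg)

lemma XL_neg: "\<exists>i. m i < 0 \<Longrightarrow> \<not> (\<exists>i. m = (\<lambda>k. - delta i k)) \<Longrightarrow> XL x1 x2 x0 p u0 r s k m = (\<lambda>_. 0)"
  by (cases k) auto



locale setting =
  fixes x1 x2 x0 :: real
    and p q u0 :: "real \<Rightarrow> complex"
    and r s :: "'d::finite \<Rightarrow> real \<Rightarrow> complex"
  assumes lt: "x1 < x2" and x0I: "x0 \<in> {x1..x2}"
    and pc: "continuous_on {x1..x2} p" and pnz: "\<forall>x\<in>{x1..x2}. p x \<noteq> 0"
    and qc: "continuous_on {x1..x2} q"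
    and rc: "\<forall>i. continuous_on {x1..x2} (r i)" and sc: "\<forall>i. continuous_on {x1..x2} (s i)"
    and unz: "\<forall>x\<in>{x1..x2}. u0 x \<noteq> 0"
    and udiff: "\<forall>x\<in>{x1..x2}. u0 differentiable (at x within {x1..x2})"
    and Pdiff: "\<forall>x\<in>{x1..x2}. (\<lambda>t. p t * dI x1 x2 u0 t) differentiable (at x within {x1..x2})"
    and Lu0: "\<forall>x\<in>{x1..x2}. Lop x1 x2 p q u0 x = 0"
begin

abbreviation "Xt \<equiv> XtL x1 x2 x0 p u0 r s"
abbreviation "Xp \<equiv> XL x1 x2 x0 p u0 r s"

lemma u0_deriv: "x \<in> {x1..x2} \<Longrightarrow> (u0 has_vector_derivative dI x1 x2 u0 x) (at x within {x1..x2})"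
  using udiff unfolding dI_def by (simp add: vector_derivative_works[symmetric])

lemma P_deriv: "x \<in> {x1..x2} \<Longrightarrow> ((\<lambda>t. p t * dI x1 x2 u0 t) has_vector_derivative
    dI x1 x2 (\<lambda>t. p t * dI x1 x2 u0 t) x) (at x within {x1..x2})"
  using Pdiff unfolding dI_def[of x1 x2 "\<lambda>t. p t * dI x1 x2 u0 t"]
  by (simp add: vector_derivative_works[symmetric])

lemma u0c: "continuous_on {x1..x2} u0"
  using u0_deriv by (rule continuous_on_vector_derivative)

lemma u0'c: "continuous_on {x1..x2} (dI x1 x2 u0)"
proof -
  have "continuous_on {x1..x2} (\<lambda>t. p t * dI x1 x2 u0 t)"
    using P_deriv by (rule continuous_on_vector_derivative)
  then have "continuous_on {x1..x2} (\<lambda>t. (p t * dI x1 x2 u0 t) / p t)"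
    using pc pnz by (intro continuous_on_divide) auto
  then show ?thesis by (rule continuous_on_eq) (use pnz in auto)
qed

lemma rci: "continuous_on {x1..x2} (r i)" using rc by auto
lemma sci: "continuous_on {x1..x2} (s i)" using sc by auto

lemma prod_deriv:
  assumes "C1 x1 x2 X g" "x \<in> {x1..x2}"
  shows "((\<lambda>t. u0 t * X t) has_vector_derivative (u0 x * g x + dI x1 x2 u0 x * X x)) (at x within {x1..x2})"
  using assms by (auto simp: C1_def intro!: has_vector_derivative_mult u0_deriv)

lemma dI_prod:
  assumes "C1 x1 x2 X g" "x \<in> {x1..x2}"
  shows "dI x1 x2 (\<lambda>t. u0 t * X t) x = u0 x * g x + dI x1 x2 u0 x * X x"
  using dI_eq[OF lt assms(2) prod_deriv[OF assms]] .

lemma odd_cont: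
  assumes "C1 x1 x2 X g"
  shows "continuous_on {x1..x2} (\<lambda>t. u0 t * Rop x1 x2 r s i (\<lambda>y. u0 y * X y) t)"
proof -
  have "continuous_on {x1..x2} (\<lambda>t. u0 t * (r i t * (u0 t * X t) + s i t * (u0 t * g t + dI x1 x2 u0 t * X t)))"
    using C1_cont[OF assms] assms u0c u0'c rci[of i] sci[of i]
    by (auto simp: C1_def intro!: continuous_intros)
  then show ?thesis by (rule continuous_on_eq) (auto simp: Rop_def dI_prod[OF assms])
qed

lemma even_cont:
  assumes "\<forall>i. C1 x1 x2 (X i) (g i)"
  shows "continuous_on {x1..x2} (\<lambda>t. 1 / (p t * (u0 t)\<^sup>2) * (\<Sum>i\<in>UNIV. X i t))"
proof -
  have "continuous_on {x1..x2} (X i)" for i using C1_cont assms by blast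
  then show ?thesis using pc u0c pnz unz
    by (auto intro!: continuous_intros)
qed

lemma XtL_C1: "\<exists>g. C1 x1 x2 (Xt k j) g"
proof (induction k arbitrary: j)
  case 0
  show ?case by (cases "j = (\<lambda>_. 0)") (auto intro!: exI C1_const)
next
  case (Suc k)
  have o: "\<exists>g. C1 x1 x2 (\<lambda>x. of_nat (Suc k) * integ x0 (\<lambda>t. u0 t *
             Rop x1 x2 r s i (\<lambda>y. u0 y * Xt k (\<lambda>k. j k - delta i k) y) t) x) g" for i
  proof -
    from Suc.IH obtain g where g: "C1 x1 x2 (Xt k (\<lambda>k. j k - delta i k)) g" by blast
    show ?thesis using C1_integ[OF odd_cont[OF g] x0I] by blast
  qed
  have e: "\<exists>g. C1 x1 x2 (\<lambda>x. of_nat (Suc k) * integ x0 (\<lambda>t. 1 / (p t * (u0 t)\<^sup>2) *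
             (\<Sum>i\<in>UNIV. Xt k (\<lambda>k. j k - delta i k) t)) x) g"
  proof -
    from Suc.IH have "\<forall>i. \<exists>g. C1 x1 x2 (Xt k (\<lambda>k. j k - delta i k)) g" by blast
    then obtain G where "\<forall>i. C1 x1 x2 (Xt k (\<lambda>k. j k - delta i k)) (G i)" by metis
    then have "continuous_on {x1..x2} (\<lambda>t. 1 / (p t * (u0 t)\<^sup>2) * (\<Sum>i\<in>UNIV. Xt k (\<lambda>k. j k - delta i k) t))"
      by (rule even_cont)
    then show ?thesis using C1_integ[OF _ x0I] by blast
  qed
  show ?case unfolding XtL.simps(2) Let_def using o e by (auto intro: C1_const)
qed

lemma XL_C1: "\<exists>g. C1 x1 x2 (Xp k j) g"
proof (induction k arbitrary: j)
  case 0
  show ?case by (cases "\<exists>i. j = (\<lambda>k. - delta i k)") (auto intro!: exI C1_const)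
next
  case (Suc k)
  have o: "\<exists>g. C1 x1 x2 (\<lambda>x. of_nat (Suc k) * integ x0 (\<lambda>t. u0 t *
             Rop x1 x2 r s i (\<lambda>y. u0 y * Xp k (\<lambda>k. j k - delta i k) y) t) x) g" for i
  proof -
    from Suc.IH obtain g where g: "C1 x1 x2 (Xp k (\<lambda>k. j k - delta i k)) g" by blast
    show ?thesis using C1_integ[OF odd_cont[OF g] x0I] by blast
  qed
  have e: "\<exists>g. C1 x1 x2 (\<lambda>x. of_nat (Suc k) * integ x0 (\<lambda>t. 1 / (p t * (u0 t)\<^sup>2) *
             (\<Sum>i\<in>UNIV. Xp k (\<lambda>k. j k - delta i k) t)) x) g"
  proof -
    from Suc.IH have "\<forall>i. \<exists>g. C1 x1 x2 (Xp k (\<lambda>k. j k - delta i k)) g" by blast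
    then obtain G where "\<forall>i. C1 x1 x2 (Xp k (\<lambda>k. j k - delta i k)) (G i)" by metis
    then have "continuous_on {x1..x2} (\<lambda>t. 1 / (p t * (u0 t)\<^sup>2) * (\<Sum>i\<in>UNIV. Xp k (\<lambda>k. j k - delta i k) t))"
      by (rule even_cont)
    then show ?thesis using C1_integ[OF _ x0I] by blast
  qed
  show ?case unfolding XL.simps(2) Let_def using o e by (auto intro: C1_const)
qed

lemma key:
  assumes f: "C1 x1 x2 f f'" and fF: "\<forall>t\<in>{x1..x2}. f' t = F t / (p t * (u0 t)\<^sup>2)"
    and Fd: "\<forall>t\<in>{x1..x2}. (F has_vector_derivative F' t) (at t within {x1..x2})"
    and x: "x \<in> {x1..x2}"
  shows "Lop x1 x2 p q (\<lambda>t. u0 t * f t) x = F' x / u0 x"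
proof -
  define U where "U = dI x1 x2 u0"
  define P where "P = (\<lambda>t. p t * U t)"
  have wI: "p t * dI x1 x2 (\<lambda>t. u0 t * f t) t = P t * f t + F t * inverse (u0 t)"
    if t: "t \<in> {x1..x2}" for t
  proof -
    have "p t \<noteq> 0" "u0 t \<noteq> 0" using pnz unz t by auto
    then show ?thesis using dI_prod[OF f t] fF t
      by (auto simp: P_def U_def field_simps power2_eq_square)
  qed
  have fx: "(f has_vector_derivative f' x) (at x within {x1..x2})" using f x by (auto simp: C1_def)
  have d1: "((\<lambda>t. P t * f t + F t * inverse (u0 t)) has_vector_derivative
     ((P x * f' x + dI x1 x2 P x * f x) + (F x * (- U x / (u0 x)^2) + F' x * inverse (u0 x)))) (at x within {x1..x2})"
    apply (rule has_vector_derivative_add)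
     apply (rule has_vector_derivative_mult[OF _ fx])
    using P_deriv[OF x] apply (simp add: P_def U_def)
    apply (rule has_vector_derivative_mult)
    using Fd x apply blast
    using inv_deriv[OF u0_deriv[OF x]] unz x by (simp add: U_def)
  have d2: "((\<lambda>t. p t * dI x1 x2 (\<lambda>t. u0 t * f t) t) has_vector_derivative
     ((P x * f' x + dI x1 x2 P x * f x) + (F x * (- U x / (u0 x)^2) + F' x * inverse (u0 x)))) (at x within {x1..x2})"
    by (rule has_vector_derivative_transform[OF x _ d1]) (use wI in auto)
  have L0: "dI x1 x2 P x = - (q x * u0 x)" using Lu0 x by (simp add: Lop_def P_def U_def eq_neg_iff_add_eq_0)
  have Px: "P x = p x * U x" by (simp add: P_def)
  have fx': "f' x = F x / (p x * (u0 x)\<^sup>2)" using fF x by auto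
  have "p x \<noteq> 0" "u0 x \<noteq> 0" using pnz unz x by auto
  then show ?thesis
    unfolding Lop_def dI_eq[OF lt x d2] L0 Px fx'
    by (simp add: field_simps power2_eq_square)
qed

end


context setting begin

abbreviation "Xtil \<equiv> Xtilde x1 x2 x0 p u0 r s"

lemma Xtil_C1: "\<exists>g. C1 x1 x2 (Xtil j) g"
  unfolding Xtilde_def by (rule XtL_C1)

lemma dI_zero: "t \<in> {x1..x2} \<Longrightarrow> dI x1 x2 (\<lambda>y. 0) t = 0"
  by (rule dI_eq[OF lt]) auto

lemma part1:
  fixes n :: "'d \<Rightarrow> nat"
  assumes x: "x \<in> {x1..x2}"
  shows "Lop x1 x2 p q (\<lambda>t. u0 t * Xtil (\<lambda>i. 2 * int (n i)) t) x
      = 2 * of_nat (sum n UNIV) * (2 * of_nat (sum n UNIV) - 1) *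
        (\<Sum>i\<in>UNIV. Rop x1 x2 r s i
           (\<lambda>t. u0 t * Xtil (\<lambda>k. 2 * int (n k) - 2 * delta i k) t) x)"
proof (cases "sum n UNIV = 0")
  case True
  then have "n = (\<lambda>_. 0)" by (auto simp: fun_eq_iff)
  then have "Xtil (\<lambda>i. 2 * int (n i)) = (\<lambda>_. 1)" by (simp add: Xtilde_def)
  then show ?thesis using Lu0 x True by simp
next
  case False
  define N where "N = sum n UNIV"
  have "N \<noteq> 0" using False N_def by blast
  then have k0: "2 * N = Suc (2 * N - 1)" by arith
  define k where "k = 2 * N - 1"
  have k: "Suc k = 2 * N" using k0 k_def by simp
  define D where "D i t = of_nat k * (u0 t * Rop x1 x2 r s i (\<lambda>y. u0 y * Xtil (\<lambda>k. 2 * int (n k) - 2 * delta i k) y) t)" for i t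
  have Di: "(Xt k (\<lambda>k'. 2 * int (n k') - delta i k') has_vector_derivative D i t) (at t within {x1..x2})"
    if t: "t \<in> {x1..x2}" for i t
  proof (cases "n i = 0")
    case True
    have z1: "Xt k (\<lambda>k'. 2 * int (n k') - delta i k') = (\<lambda>_. 0)"
      by (rule XtL_neg, rule exI[of _ i]) (use True in \<open>auto simp: delta_def\<close>)
    have z2: "Xtil (\<lambda>k'. 2 * int (n k') - 2 * delta i k') = (\<lambda>_. 0)"
      by (rule Xtilde_neg, rule exI[of _ i]) (use True in \<open>auto simp: delta_def\<close>)
    show ?thesis by (simp add: z1 z2 D_def Rop_def dI_zero[OF t])
  next
    case False
    have "n i \<le> sum n UNIV" by (rule member_le_sum) auto
    then have "N \<ge> 1" using False N_def by simp
    then obtain k' where k': "k = Suc k'" using k by (cases k) auto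
    have odd: "odd (Suc k')" using k k' by presburger
    have lev: "nat (\<Sum>k\<in>UNIV. 2 * int (n k) - 2 * delta i k) = k'"
      using k k' by (simp add: sum2dd N_def[symmetric])
    have nn: "\<not> (\<exists>k. 2 * int (n k) - delta i k < 0)" using False by (auto simp: delta_def)
    define hh where "hh = (\<lambda>t. u0 t * Rop x1 x2 r s i (\<lambda>y. u0 y * Xtil (\<lambda>k. 2 * int (n k) - 2 * delta i k) y) t)"
    have eq: "Xt k (\<lambda>k'. 2 * int (n k') - delta i k') = (\<lambda>x. of_nat k * integ x0 hh x)"
      unfolding k' XtL.simps(2) Let_def the_odd using nn adm_odd[of n i] odd
      by (simp add: hh_def fun2 Xtilde_def lev adm_odd[of n i])
    obtain g where g: "C1 x1 x2 (Xtil (\<lambda>k. 2 * int (n k) - 2 * delta i k)) g" using Xtil_C1 by blast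
    have "((\<lambda>x. of_nat k * integ x0 hh x) has_vector_derivative of_nat k * hh t) (at t within {x1..x2})"
      by (rule has_vector_derivative_mult_right, rule integ_deriv[OF _ x0I t])
        (use odd_cont[OF g] in \<open>simp add: hh_def\<close>)
    then show ?thesis by (simp add: eq D_def hh_def)
  qed
  have "nat (2 * int N) = Suc k" using k by simp
  then have lev: "nat (\<Sum>i\<in>UNIV. 2 * int (n i)) = Suc k" unfolding sum2 N_def .
  have ev: "\<not> odd (Suc k)" using k by presburger
  define h where "h = (\<lambda>t. 1 / (p t * (u0 t)\<^sup>2) * (\<Sum>i\<in>UNIV. Xt k (\<lambda>k'. 2 * int (n k') - delta i k') t))"
  have Xe: "Xtil (\<lambda>i. 2 * int (n i)) = (\<lambda>x. of_nat (Suc k) * integ x0 h x)"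
    unfolding Xtilde_def lev XtL.simps(2) using ev adm_even[of n] by (simp add: h_def adm_even[of n])
  have hc: "continuous_on {x1..x2} h"
  proof -
    have "\<forall>i. \<exists>g. C1 x1 x2 (Xt k (\<lambda>k'. 2 * int (n k') - delta i k')) g" using XtL_C1 by blast
    then obtain G where "\<forall>i. C1 x1 x2 (Xt k (\<lambda>k'. 2 * int (n k') - delta i k')) (G i)" by metis
    then show ?thesis unfolding h_def by (rule even_cont)
  qed
  have C: "C1 x1 x2 (\<lambda>x. of_nat (Suc k) * integ x0 h x) (\<lambda>x. of_nat (Suc k) * h x)"
    by (rule C1_integ[OF hc x0I])
  have fF: "\<forall>t\<in>{x1..x2}. of_nat (Suc k) * h t =
      (of_nat (Suc k) * (\<Sum>i\<in>UNIV. Xt k (\<lambda>k'. 2 * int (n k') - delta i k') t)) / (p t * (u0 t)\<^sup>2)"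
    by (simp add: h_def)
  have Fd: "\<forall>t\<in>{x1..x2}. ((\<lambda>t. of_nat (Suc k) * (\<Sum>i\<in>UNIV. Xt k (\<lambda>k'. 2 * int (n k') - delta i k') t))
      has_vector_derivative of_nat (Suc k) * (\<Sum>i\<in>UNIV. D i t)) (at t within {x1..x2})"
    using Di by (auto intro!: has_vector_derivative_mult_right has_vector_derivative_sum)
  have "Lop x1 x2 p q (\<lambda>t. u0 t * Xtil (\<lambda>i. 2 * int (n i)) t) x =
      of_nat (Suc k) * (\<Sum>i\<in>UNIV. D i x) / u0 x"
    unfolding Xe by (rule key[OF C fF Fd x])
  also have "\<dots> = of_nat (Suc k) * of_nat k * (\<Sum>i\<in>UNIV. Rop x1 x2 r s i
           (\<lambda>t. u0 t * Xtil (\<lambda>k. 2 * int (n k) - 2 * delta i k) t) x)"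
    using unz x by (simp add: D_def sum_distrib_left sum_divide_distrib mult.assoc)
  also have "\<dots> = 2 * of_nat (sum n UNIV) * (2 * of_nat (sum n UNIV) - 1) * (\<Sum>i\<in>UNIV. Rop x1 x2 r s i
           (\<lambda>t. u0 t * Xtil (\<lambda>k. 2 * int (n k) - 2 * delta i k) t) x)"
  proof -
    have "(of_nat (Suc k) :: complex) = 2 * of_nat N" using k by (metis of_nat_mult of_nat_numeral)
    moreover have "(of_nat k :: complex) = 2 * of_nat N - 1" using k by (metis add_diff_cancel_left' calculation of_nat_Suc add.commute)
    ultimately show ?thesis by (simp add: N_def)
  qed
  finally show ?thesis .
qed

end


context setting begin

abbreviation "XP \<equiv> Xpow x1 x2 x0 p u0 r s"

lemma XP_C1: "\<exists>g. C1 x1 x2 (XP j) g"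
  unfolding Xpow_def by (rule XL_C1)

lemma part2:
  fixes n :: "'d \<Rightarrow> nat"
  assumes x: "x \<in> {x1..x2}"
  shows "Lop x1 x2 p q (\<lambda>t. u0 t * XP (\<lambda>i. 2 * int (n i)) t) x
      = (2 * of_nat (sum n UNIV) + 1) * (2 * of_nat (sum n UNIV)) *
        (\<Sum>i\<in>UNIV. Rop x1 x2 r s i
           (\<lambda>t. u0 t * XP (\<lambda>k. 2 * int (n k) - 2 * delta i k) t) x)"
proof -
  define N where "N = sum n UNIV"
  have "nat (2 * int N + 1) = Suc (2 * N)" by simp
  then have lev: "nat (sum (\<lambda>i. 2 * int (n i)) UNIV + 1) = Suc (2 * N)" unfolding sum2 N_def .
  have notm: "\<not> (\<exists>i. (\<lambda>i. 2 * int (n i)) = (\<lambda>k. - delta i k))"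
  proof
    assume "\<exists>i. (\<lambda>i. 2 * int (n i)) = (\<lambda>k. - delta i k)"
    then obtain i where "(\<lambda>i. 2 * int (n i)) = (\<lambda>k. - delta i k)" by blast
    then have "2 * int (n i) = - delta i i" by metis
    then show False by (simp add: delta_def)
  qed
  have ev: "\<not> even (Suc (2 * N))" by simp
  define h where "h = (\<lambda>t. 1 / (p t * (u0 t)\<^sup>2) * (\<Sum>i\<in>UNIV. Xp (2 * N) (\<lambda>k'. 2 * int (n k') - delta i k') t))"
  have Xe: "XP (\<lambda>i. 2 * int (n i)) = (\<lambda>x. of_nat (Suc (2 * N)) * integ x0 h x)"
    unfolding Xpow_def lev XL.simps(2) using notm ev adm_even[of n] by (simp add: h_def adm_even[of n])
  define D where "D i t = of_nat (2 * N) * (u0 t * Rop x1 x2 r s i (\<lambda>y. u0 y * XP (\<lambda>k. 2 * int (n k) - 2 * delta i k) y) t)" for i t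
  have Di: "(Xp (2 * N) (\<lambda>k'. 2 * int (n k') - delta i k') has_vector_derivative D i t) (at t within {x1..x2})"
    if t: "t \<in> {x1..x2}" for i t
  proof (cases "N = 0")
    case True
    then have "n = (\<lambda>_. 0)" by (auto simp: N_def fun_eq_iff)
    then have "(\<lambda>k'. 2 * int (n k') - delta i k') = (\<lambda>k. - delta i k)" by auto
    then have "Xp (2 * N) (\<lambda>k'. 2 * int (n k') - delta i k') = (\<lambda>_. 1 / of_nat CARD('d))"
      using True by auto
    then show ?thesis using True by (simp add: D_def)
  next
    case NF: False
    show ?thesis
    proof (cases "n i = 0")
      case True
      from NF obtain j where j: "n j \<noteq> 0" by (auto simp: N_def)
      have z1: "Xp (2 * N) (\<lambda>k'. 2 * int (n k') - delta i k') = (\<lambda>_. 0)"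
      proof (rule XL_neg)
        show "\<exists>k. 2 * int (n k) - delta i k < 0" using True by (intro exI[of _ i]) (auto simp: delta_def)
        show "\<not> (\<exists>i'. (\<lambda>k. 2 * int (n k) - delta i k) = (\<lambda>k. - delta i' k))"
        proof
          assume "\<exists>i'. (\<lambda>k. 2 * int (n k) - delta i k) = (\<lambda>k. - delta i' k)"
          then obtain i' where "(\<lambda>k. 2 * int (n k) - delta i k) = (\<lambda>k. - delta i' k)" by blast
          then have "2 * int (n j) - delta i j = - delta i' j" by metis
          then show False using j True by (auto simp: delta_def split: if_splits)
        qed
      qed
      have z2: "XP (\<lambda>k'. 2 * int (n k') - 2 * delta i k') = (\<lambda>_. 0)"
        unfolding Xpow_def
      proof (rule XL_neg)
        show "\<exists>k. 2 * int (n k) - 2 * delta i k < 0" using True by (intro exI[of _ i]) (auto simp: delta_def)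
        show "\<not> (\<exists>i'. (\<lambda>k. 2 * int (n k) - 2 * delta i k) = (\<lambda>k. - delta i' k))"
        proof
          assume "\<exists>i'. (\<lambda>k. 2 * int (n k) - 2 * delta i k) = (\<lambda>k. - delta i' k)"
          then obtain i' where "(\<lambda>k. 2 * int (n k) - 2 * delta i k) = (\<lambda>k. - delta i' k)" by blast
          then have "2 * int (n i) - 2 * delta i i = - delta i' i" by metis
          then show False using True by (auto simp: delta_def split: if_splits)
        qed
      qed
      show ?thesis by (simp add: z1 z2 D_def Rop_def dI_zero[OF t])
    next
      case False
      have "n i \<le> sum n UNIV" by (rule member_le_sum) auto
      then have "N \<ge> 1" using False N_def by simp
      define k' where "k' = 2 * N - 1"
      have k': "2 * N = Suc k'" using \<open>N \<ge> 1\<close> k'_def by simp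
      have evk: "even (Suc k')" using k' by presburger
      have "nat (2 * int N - 2 + 1) = k'" using k' by simp
      then have lev': "nat ((\<Sum>k\<in>UNIV. 2 * int (n k) - 2 * delta i k) + 1) = k'"
        unfolding sum2dd N_def .
      have nn: "\<not> (\<exists>k. 2 * int (n k) - delta i k < 0)" using False by (auto simp: delta_def)
      have nm: "\<not> (\<exists>i'. (\<lambda>k. 2 * int (n k) - delta i k) = (\<lambda>k. - delta i' k))"
      proof
        assume "\<exists>i'. (\<lambda>k. 2 * int (n k) - delta i k) = (\<lambda>k. - delta i' k)"
        then obtain i' where "(\<lambda>k. 2 * int (n k) - delta i k) = (\<lambda>k. - delta i' k)" by blast
        then have "2 * int (n i) - delta i i = - delta i' i" by metis
        then have "2 * int (n i) - 1 \<le> 0" by (auto simp: delta_def split: if_splits)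
        then show False using False by simp
      qed
      define hh where "hh = (\<lambda>t. u0 t * Rop x1 x2 r s i (\<lambda>y. u0 y * XP (\<lambda>k. 2 * int (n k) - 2 * delta i k) y) t)"
      have eq: "Xp (2 * N) (\<lambda>k'. 2 * int (n k') - delta i k') = (\<lambda>x. of_nat (2 * N) * integ x0 hh x)"
        unfolding k' XL.simps(2) Let_def the_odd using nn nm adm_odd[of n i] evk
        by (simp add: hh_def fun2 Xpow_def lev' adm_odd[of n i])
      obtain g where g: "C1 x1 x2 (XP (\<lambda>k. 2 * int (n k) - 2 * delta i k)) g" using XP_C1 by blast
      have "((\<lambda>x. of_nat (2 * N) * integ x0 hh x) has_vector_derivative of_nat (2 * N) * hh t) (at t within {x1..x2})"
        by (rule has_vector_derivative_mult_right, rule integ_deriv[OF _ x0I t])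
          (use odd_cont[OF g] in \<open>simp add: hh_def\<close>)
      then show ?thesis unfolding eq by (simp add: D_def hh_def)
    qed
  qed
  have hc: "continuous_on {x1..x2} h"
  proof -
    have "\<forall>i. \<exists>g. C1 x1 x2 (Xp (2 * N) (\<lambda>k'. 2 * int (n k') - delta i k')) g" using XL_C1 by blast
    then obtain G where "\<forall>i. C1 x1 x2 (Xp (2 * N) (\<lambda>k'. 2 * int (n k') - delta i k')) (G i)" by metis
    then show ?thesis unfolding h_def by (rule even_cont)
  qed
  have C: "C1 x1 x2 (\<lambda>x. of_nat (Suc (2 * N)) * integ x0 h x) (\<lambda>x. of_nat (Suc (2 * N)) * h x)"
    by (rule C1_integ[OF hc x0I])
  have fF: "\<forall>t\<in>{x1..x2}. of_nat (Suc (2 * N)) * h t =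
      (of_nat (Suc (2 * N)) * (\<Sum>i\<in>UNIV. Xp (2 * N) (\<lambda>k'. 2 * int (n k') - delta i k') t)) / (p t * (u0 t)\<^sup>2)"
    by (simp add: h_def)
  have Fd: "\<forall>t\<in>{x1..x2}. ((\<lambda>t. of_nat (Suc (2 * N)) * (\<Sum>i\<in>UNIV. Xp (2 * N) (\<lambda>k'. 2 * int (n k') - delta i k') t))
      has_vector_derivative of_nat (Suc (2 * N)) * (\<Sum>i\<in>UNIV. D i t)) (at t within {x1..x2})"
    using Di by (auto intro!: has_vector_derivative_mult_right has_vector_derivative_sum)
  have "Lop x1 x2 p q (\<lambda>t. u0 t * XP (\<lambda>i. 2 * int (n i)) t) x =
      of_nat (Suc (2 * N)) * (\<Sum>i\<in>UNIV. D i x) / u0 x"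
    unfolding Xe by (rule key[OF C fF Fd x])
  also have "\<dots> = of_nat (Suc (2 * N)) * of_nat (2 * N) * (\<Sum>i\<in>UNIV. Rop x1 x2 r s i
           (\<lambda>t. u0 t * XP (\<lambda>k. 2 * int (n k) - 2 * delta i k) t) x)"
    using unz x by (simp add: D_def sum_distrib_left sum_divide_distrib mult.assoc)
  also have "\<dots> = (2 * of_nat (sum n UNIV) + 1) * (2 * of_nat (sum n UNIV)) * (\<Sum>i\<in>UNIV. Rop x1 x2 r s i
           (\<lambda>t. u0 t * XP (\<lambda>k. 2 * int (n k) - 2 * delta i k) t) x)"
    by (simp add: N_def add.commute)
  finally show ?thesis .
qed

end
theorem mainTheorem6:
  fixes x1 x2 x0 :: real
    and p q u0 :: "real \<Rightarrow> complex"
    and r s :: "'d::finite \<Rightarrow> real \<Rightarrow> complex"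
    and n :: "'d \<Rightarrow> nat"
  assumes "x1 < x2" and "x0 \<in> {x1..x2}"
    and "continuous_on {x1..x2} p" and "\<forall>x\<in>{x1..x2}. p x \<noteq> 0"
    and "continuous_on {x1..x2} q"
    and "\<forall>i. continuous_on {x1..x2} (r i)" and "\<forall>i. continuous_on {x1..x2} (s i)"
    and "\<forall>x\<in>{x1..x2}. u0 x \<noteq> 0"
    and "\<forall>x\<in>{x1..x2}. u0 differentiable (at x within {x1..x2})"
    and "\<forall>x\<in>{x1..x2}. (\<lambda>t. p t * dI x1 x2 u0 t) differentiable (at x within {x1..x2})"
    and "\<forall>x\<in>{x1..x2}. Lop x1 x2 p q u0 x = 0"
  shows "\<forall>x\<in>{x1..x2}.
      Lop x1 x2 p q (\<lambda>t. u0 t * Xtilde x1 x2 x0 p u0 r s (\<lambda>i. 2 * int (n i)) t) x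
      = 2 * of_nat (sum n UNIV) * (2 * of_nat (sum n UNIV) - 1) *
        (\<Sum>i\<in>UNIV. Rop x1 x2 r s i
           (\<lambda>t. u0 t * Xtilde x1 x2 x0 p u0 r s (\<lambda>k. 2 * int (n k) - 2 * delta i k) t) x)
    \<and> Lop x1 x2 p q (\<lambda>t. u0 t * Xpow x1 x2 x0 p u0 r s (\<lambda>i. 2 * int (n i)) t) x
      = (2 * of_nat (sum n UNIV) + 1) * (2 * of_nat (sum n UNIV)) *
        (\<Sum>i\<in>UNIV. Rop x1 x2 r s i
           (\<lambda>t. u0 t * Xpow x1 x2 x0 p u0 r s (\<lambda>k. 2 * int (n k) - 2 * delta i k) t) x)"
proof -
  interpret setting x1 x2 x0 p q u0 r s
    using assms by unfold_locales auto
  show ?thesis using part1 part2 by blast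
qed

end
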